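(* Let $1<p<\infty$, $[c,d]\subset(0,\infty)$ and $h\in L^1([c,d])$. Then for every $\varepsilon>0$ there exists $g\in\mathbb W_{p',1/v_1}$ such that $|g|=|h|$ on $[c,d]$ and $\|g\|_{\mathscr W_{p',1/v_1}}<\varepsilon$.
   Context: $p'=p/(p-1)$. For $1\le r<\infty$, $\mathscr V_r(0,\infty)$ is the set of $v\in L^r_{\rm loc}(0,\infty)$, $v\ge0$, $\|v\|_{L^1(0,\infty)}\ne0$. Let $v_0,v_1\in\mathscr V_p(0,\infty)$ with $1/v_1\in L^{p'}_{\rm loc}(0,\infty)$, and assume there is $c_0\in(0,\infty)$ with $\|v_1^{-1}\|_{L^{p'}(0,c_0)}\|v_0\|_{L^p(0,c_0)}=\|v_1^{-1}\|_{L^{p'}(c_0,\infty)}\|v_0\|_{L^p(c_0,\infty)}=\infty$. Then there exist unique strictly increasing absolutely continuous functions $a,b$ on $(0,\infty)$ with $a(t),b(t)\to0$ as $t\to0$, $a(t),b(t)\to\infty$ as $t\to\infty$, $a(t)<t<b(t)$, $\int_{a(t)}^t v_1^{-p'}=\int_t^{b(t)}v_1^{-p'}$ and $\bigl(\int_{a(t)}^{b(t)}v_1^{-p'}\bigr)^{1/p'}\bigl(\int_{a(t)}^{b(t)}v_0^{p}\bigr)^{1/p}=1$ for all $t>0$; $a^{-1}$ is the inverse of $a$ and $V_1(t):=\int_{a(t)}^{b(t)}v_1^{-p'}$. For $g\in L^1_{\rm loc}(0,\infty)$: $\mathbb G(g)=\Bigl(\int_0^\infty v_1^{-p'}(t)\Bigl|\int_t^{a^{-1}(t)}\frac{g(x)}{V_1(x)}\bigl(\int_{a(x)}^t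 v_1^{-p'}\bigr)dx\Bigr|^{p'}dt\Bigr)^{1/p'}$, $\mathcal G(g)=\Bigl(\int_0^\infty v_1^{-p'}(t)V_1^{p'}(t)\Bigl|\int_t^{a^{-1}(t)}\frac{g(x)}{V_1(x)}dx\Bigr|^{p'}dt\Bigr)^{1/p'}$, $\mathsf G(g)=\Bigl(\int_0^\infty\bigl(\int_t^{a^{-1}(t)}|g(x)|dx\bigr)^{p'}v_1^{-p'}(t)dt\Bigr)^{1/p'}$; $\|g\|_{\mathscr W_{p',1/v_1}}:=\mathbb G(g)+\mathcal G(g)$ and $\mathbb W_{p',1/v_1}=\{g\in L^1_{\rm loc}(0,\infty):\mathsf G(g)<\infty\}$. *)

theory Defs
  imports "HOL-Analysis.Analysis"
begin

definition conj_exp :: "real \<Rightarrow> real" where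
  "conj_exp p = p / (p - 1)"

definition ennpow :: "ennreal \<Rightarrow> real \<Rightarrow> ennreal" where
  "ennpow x r = (if x = \<infinity> then \<infinity> else ennreal (enn2real x powr r))"

definition Lloc :: "real \<Rightarrow> (real \<Rightarrow> real) \<Rightarrow> bool" where
  "Lloc r f \<longleftrightarrow> (\<lambda>x. indicator {0<..} x * f x) \<in> borel_measurable lborel \<and>
     (\<forall>c d. 0 < c \<longrightarrow> c \<le> d \<longrightarrow>
        (\<integral>\<^sup>+x\<in>{c..d}. ennreal (\<bar>f x\<bar> powr r) \<partial>lborel) < \<infinity>)"

definition Vclass :: "real \<Rightarrow> (real \<Rightarrow> real) \<Rightarrow> bool" where
  "Vclass r v \<longleftrightarrow> Lloc r v \<and> (\<forall>x>0. v x \<ge> 0) \<and>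
     (\<integral>\<^sup>+x\<in>{0<..}. ennreal (v x) \<partial>lborel) \<noteq> 0"

definition inv_Lloc :: "real \<Rightarrow> (real \<Rightarrow> real) \<Rightarrow> bool" where
  "inv_Lloc r v \<longleftrightarrow> (AE x in lborel. x > 0 \<longrightarrow> v x \<noteq> 0) \<and> Lloc r (\<lambda>x. 1 / v x)"

definition Lnorm :: "real \<Rightarrow> (real \<Rightarrow> real) \<Rightarrow> real set \<Rightarrow> ennreal" where
  "Lnorm r f A = ennpow (\<integral>\<^sup>+x\<in>A. ennreal (\<bar>f x\<bar> powr r) \<partial>lborel) (1 / r)"

definition abs_cont_on :: "real set \<Rightarrow> (real \<Rightarrow> real) \<Rightarrow> bool" where
  "abs_cont_on S f \<longleftrightarrow> (\<forall>\<epsilon>>0. \<exists>\<delta>>0. \<forall>(n::nat) (x::nat\<Rightarrow>real) y.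
      (\<forall>i<n. x i \<le> y i \<and> x i \<in> S \<and> y i \<in> S) \<longrightarrow>
      (\<forall>i. Suc i < n \<longrightarrow> y i \<le> x (Suc i)) \<longrightarrow>
      (\<Sum>i<n. y i - x i) < \<delta> \<longrightarrow> (\<Sum>i<n. \<bar>f (y i) - f (x i)\<bar>) < \<epsilon>)"

definition loc_abs_cont :: "(real \<Rightarrow> real) \<Rightarrow> bool" where
  "loc_abs_cont f \<longleftrightarrow> (\<forall>c d. 0 < c \<longrightarrow> c \<le> d \<longrightarrow> abs_cont_on {c..d} f)"

definition wgt :: "real \<Rightarrow> (real \<Rightarrow> real) \<Rightarrow> real \<Rightarrow> real" where
  "wgt p v1 x = \<bar>1 / v1 x\<bar> powr conj_exp p"

definition V1fun :: "real \<Rightarrow> (real \<Rightarrow> real) \<Rightarrow> (real \<Rightarrow> real) \<Rightarrow> (real \<Rightarrow> real) \<Rightarrow> real \<Rightarrow> real" where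
  "V1fun p v1 a b t = (LINT x:{a t..b t}|lborel. wgt p v1 x)"

definition GG :: "real \<Rightarrow> (real \<Rightarrow> real) \<Rightarrow> (real \<Rightarrow> real) \<Rightarrow> (real \<Rightarrow> real) \<Rightarrow> (real \<Rightarrow> real) \<Rightarrow> ennreal" where
  "GG p v1 a b g = ennpow (\<integral>\<^sup>+t\<in>{0<..}. ennreal (wgt p v1 t *
       \<bar>LINT x:{t..inv_into {0<..} a t}|lborel.
          g x / V1fun p v1 a b x * (LINT s:{a x..t}|lborel. wgt p v1 s)\<bar> powr conj_exp p) \<partial>lborel)
     (1 / conj_exp p)"

definition Gc :: "real \<Rightarrow> (real \<Rightarrow> real) \<Rightarrow> (real \<Rightarrow> real) \<Rightarrow> (real \<Rightarrow> real) \<Rightarrow> (real \<Rightarrow> real) \<Rightarrow> ennreal" where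
  "Gc p v1 a b g = ennpow (\<integral>\<^sup>+t\<in>{0<..}. ennreal (wgt p v1 t * V1fun p v1 a b t powr conj_exp p *
       \<bar>LINT x:{t..inv_into {0<..} a t}|lborel. g x / V1fun p v1 a b x\<bar> powr conj_exp p) \<partial>lborel)
     (1 / conj_exp p)"

definition Gs :: "real \<Rightarrow> (real \<Rightarrow> real) \<Rightarrow> (real \<Rightarrow> real) \<Rightarrow> (real \<Rightarrow> real) \<Rightarrow> ennreal" where
  "Gs p v1 a g = ennpow (\<integral>\<^sup>+t\<in>{0<..}. ennreal
       ((LINT x:{t..inv_into {0<..} a t}|lborel. \<bar>g x\<bar>) powr conj_exp p * wgt p v1 t) \<partial>lborel)
     (1 / conj_exp p)"

definition Wnorm :: "real \<Rightarrow> (real \<Rightarrow> real) \<Rightarrow> (real \<Rightarrow> real) \<Rightarrow> (real \<Rightarrow> real) \<Rightarrow> (real \<Rightarrow> real) \<Rightarrow> ennreal" where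
  "Wnorm p v1 a b g = GG p v1 a b g + Gc p v1 a b g"

definition Wspace :: "real \<Rightarrow> (real \<Rightarrow> real) \<Rightarrow> (real \<Rightarrow> real) \<Rightarrow> (real \<Rightarrow> real) set" where
  "Wspace p v1 a = {g. Lloc 1 g \<and> Gs p v1 a g < \<infinity>}"

end

theory Submission
  imports Defs "HOL-Probability.Probability_Mass_Function"
begin

lemma Icc_split:
  fixes f :: "real \<Rightarrow> real" and x y z :: real
  assumes "x \<le> y" "y \<le> z" "set_integrable lborel {x..z} f"
  shows "(LINT t:{x..z}|lborel. f t) = (LINT t:{x..y}|lborel. f t) + (LINT t:{y..z}|lborel. f t)"
proof -
  have "interval_lebesgue_integrable lborel (ereal x) (ereal z) f"
    unfolding interval_lebesgue_integrable_def using assms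
    by (auto intro: set_integrable_subset[OF assms(3)])
  then have "(LBINT t=ereal x..ereal y. f t) + (LBINT t=ereal y..ereal z. f t) = (LBINT t=ereal x..ereal z. f t)"
    using assms by (intro interval_integral_sum) (simp add: min_def max_def)
  then show ?thesis using assms by (simp add: interval_integral_Icc)
qed

lemma set_integral_singleton:
  fixes f :: "real \<Rightarrow> real"
  shows "(LINT x:{c}|lborel. f x) = 0"
proof -
  have "(LINT x:{c}|lborel. f x) = (LINT x:{}|lborel. f x)"
    by (rule set_integral_discrete_difference[where X="{c}"]) auto
  then show ?thesis by (simp add: set_lebesgue_integral_def)
qed

lemma sint_mult:
  fixes f s :: "real \<Rightarrow> real"
  assumes "s \<in> borel_measurable borel" "\<And>x. \<bar>s x\<bar> \<le> B" "set_integrable lborel A f"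
  shows "set_integrable lborel A (\<lambda>x. s x * f x)"
proof -
  have m: "(\<lambda>x. indicator A x *\<^sub>R f x) \<in> borel_measurable borel"
    using borel_measurable_integrable[OF assms(3)[unfolded set_integrable_def]] by simp
  have i: "set_integrable lborel A (\<lambda>x. B * f x)" using assms(3) by simp
  show ?thesis
  proof (rule set_integrable_bound[OF i])
    have "(\<lambda>x. s x * (indicator A x *\<^sub>R f x)) \<in> borel_measurable borel"
      using m assms(1) by measurable
    then show "set_borel_measurable lborel A (\<lambda>x. s x * f x)"
      unfolding set_borel_measurable_def by (simp add: algebra_simps)
    show "AE x in lborel. x \<in> A \<longrightarrow> norm (s x * f x) \<le> norm (B * f x)"
    proof (intro AE_I2 impI)
      fix x
      have "\<bar>s x\<bar> * \<bar>f x\<bar> \<le> B * \<bar>f x\<bar>" by (rule mult_right_mono[OF assms(2)]) simp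
      moreover have "0 \<le> B" using assms(2)[of x] by simp
      ultimately show "norm (s x * f x) \<le> norm (B * f x)" by (simp add: abs_mult)
    qed
  qed
qed

lemma set_integral_abs_le:
  fixes f :: "real \<Rightarrow> real"
  shows "\<bar>LINT x:A|lborel. f x\<bar> \<le> (LINT x:A|lborel. \<bar>f x\<bar>)"
  using integral_norm_bound[of lborel "\<lambda>x. indicator A x *\<^sub>R f x"]
  by (simp add: set_lebesgue_integral_def abs_mult)

lemma set_integral_nonneg':
  fixes f :: "real \<Rightarrow> real"
  assumes "\<And>x. x \<in> A \<Longrightarrow> 0 \<le> f x"
  shows "0 \<le> (LINT x:A|lborel. f x)"
  unfolding set_lebesgue_integral_def
  by (rule Bochner_Integration.integral_nonneg) (simp add: assms split: split_indicator)

definition gsgn :: "real \<Rightarrow> real \<Rightarrow> real \<Rightarrow> real \<Rightarrow> real" where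
  "gsgn A B x y = (if A * x + B * y \<le> 0 then 1 else -1)"

primrec gS :: "(nat \<Rightarrow> real) \<Rightarrow> (nat \<Rightarrow> real) \<Rightarrow> nat \<Rightarrow> real \<times> real" where
  "gS u v 0 = (0, 0)"
| "gS u v (Suc k) = (fst (gS u v k) + gsgn (fst (gS u v k)) (snd (gS u v k)) (u k) (v k) * u k,
                     snd (gS u v k) + gsgn (fst (gS u v k)) (snd (gS u v k)) (u k) (v k) * v k)"

definition geps :: "(nat \<Rightarrow> real) \<Rightarrow> (nat \<Rightarrow> real) \<Rightarrow> nat \<Rightarrow> real" where
  "geps u v k = gsgn (fst (gS u v k)) (snd (gS u v k)) (u k) (v k)"

lemma geps_abs: "\<bar>geps u v k\<bar> = 1"
  by (simp add: geps_def gsgn_def)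

lemma gS_sum: "gS u v k = ((\<Sum>i<k. geps u v i * u i), (\<Sum>i<k. geps u v i * v i))"
  by (induction k) (auto simp: geps_def)

lemma gS_bound: "(fst (gS u v k))\<^sup>2 + (snd (gS u v k))\<^sup>2 \<le> (\<Sum>i<k. (u i)\<^sup>2 + (v i)\<^sup>2)"
proof (induction k)
  case 0
  then show ?case by simp
next
  case (Suc k)
  define A where "A = fst (gS u v k)"
  define B where "B = snd (gS u v k)"
  define e where "e = gsgn A B (u k) (v k)"
  have e2: "e * e = 1" by (simp add: e_def gsgn_def)
  have ne: "e * (A * u k + B * v k) \<le> 0" by (simp add: e_def gsgn_def)
  have "(A + e * u k)\<^sup>2 + (B + e * v k)\<^sup>2 = A\<^sup>2 + B\<^sup>2 + 2 * (e * (A * u k + B * v k)) + (e * e) * ((u k)\<^sup>2 + (v k)\<^sup>2)"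
    by (simp add: power2_eq_square algebra_simps)
  also have "\<dots> \<le> A\<^sup>2 + B\<^sup>2 + ((u k)\<^sup>2 + (v k)\<^sup>2)" using ne e2 by simp
  finally show ?case using Suc by (simp add: A_def B_def e_def)
qed

lemma greedy_sign:
  fixes u v :: "nat \<Rightarrow> real"
  shows "\<exists>e. (\<forall>i. \<bar>e i\<bar> = 1) \<and> (\<forall>k. (\<Sum>i<k. e i * u i)\<^sup>2 + (\<Sum>i<k. e i * v i)\<^sup>2 \<le> (\<Sum>i<k. (u i)\<^sup>2 + (v i)\<^sup>2))"
proof (intro exI[of _ "geps u v"] conjI allI)
  fix k
  show "\<bar>geps u v k\<bar> = 1" by (rule geps_abs)
  show "(\<Sum>i<k. geps u v i * u i)\<^sup>2 + (\<Sum>i<k. geps u v i * v i)\<^sup>2 \<le> (\<Sum>i<k. (u i)\<^sup>2 + (v i)\<^sup>2)"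
    using gS_bound[of u v k] by (simp add: gS_sum)
qed

lemma s_meas: fixes c L :: real shows "(\<lambda>x. (e::nat\<Rightarrow>real) (nat \<lfloor>(x - c) / L\<rfloor>)) \<in> borel_measurable borel"
proof -
  have "(\<lambda>x::real. (x - c) / L) \<in> borel_measurable borel" by measurable
  from measurable_compose[OF this measurable_real_floor]
  have "(\<lambda>x. \<lfloor>(x - c) / L\<rfloor>) \<in> borel \<rightarrow>\<^sub>M count_space UNIV" by (simp add: o_def)
  from measurable_compose[OF this, of nat "count_space UNIV"]
  have g: "(\<lambda>x. nat \<lfloor>(x - c) / L\<rfloor>) \<in> borel \<rightarrow>\<^sub>M count_space UNIV" by simp
  show ?thesis
    by (rule measurable_compose_countable[OF _ g]) simp
qed

lemma cancel:
  fixes f1 f2 :: "real \<Rightarrow> real" and c d \<eta> :: real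
  assumes cd: "c \<le> d" and i1: "set_integrable lborel {c..d} f1"
    and i2: "set_integrable lborel {c..d} f2" and eta: "0 < \<eta>"
  shows "\<exists>s. s \<in> borel_measurable borel \<and> (\<forall>x. \<bar>s x\<bar> = 1) \<and>
    (\<forall>y\<in>{c..d}. \<bar>LINT x:{c..y}|lborel. s x * f1 x\<bar> \<le> \<eta> \<and> \<bar>LINT x:{c..y}|lborel. s x * f2 x\<bar> \<le> \<eta>)"
proof -
  define H where "H x = \<bar>f1 x\<bar> + \<bar>f2 x\<bar>" for x
  have iH: "set_integrable lborel {c..d} H"
    unfolding H_def using i1 i2 by (intro set_integral_add set_integrable_abs)
  define F where "F x = indicator {c..d} x * H x" for x
  have iF: "integrable lborel F"
    using iH unfolding set_integrable_def F_def by simp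
  have iFb: "set_integrable lborel {c..b} F" for b
    unfolding set_integrable_def using iF by (intro integrable_mult_indicator) auto
  define G where "G y = (LINT x:{c..y}|lborel. F x)" for y
  have "continuous_on UNIV G"
    unfolding G_def by (rule continuous_on_LBINT) (rule iFb)
  then have "uniformly_continuous_on {c..d} G"
    by (intro compact_uniformly_continuous) (auto intro: continuous_on_subset)
  define M where "M = (LINT x:{c..d}|lborel. H x)"
  have M0: "0 \<le> M" unfolding M_def H_def by (rule set_integral_nonneg') simp
  define \<delta> where "\<delta> = min (\<eta>/2) (\<eta>\<^sup>2 / (4 * (M + 1)))"
  have d0: "0 < \<delta>" using eta M0 by (simp add: \<delta>_def)
  obtain L0 where L0a: "L0 > 0" and L0b: "\<forall>x\<in>{c..d}. \<forall>x'\<in>{c..d}. dist x' x < L0 \<longrightarrow> dist (G x') (G x) < \<delta>"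
    using \<open>uniformly_continuous_on {c..d} G\<close>[unfolded uniformly_continuous_on_def, rule_format, OF d0] by blast
  have L0: "L0 > 0" "\<And>x x'. x \<in> {c..d} \<Longrightarrow> x' \<in> {c..d} \<Longrightarrow> dist x' x < L0 \<Longrightarrow> dist (G x') (G x) < \<delta>"
    using L0a L0b by auto
  define L where "L = L0 / 2"
  have L: "0 < L" "L < L0" using L0 by (auto simp: L_def)
  define lo where "lo i = min d (c + real i * L)" for i
  have lo0: "lo 0 = c" using cd by (simp add: lo_def)
  have lo_ge: "c \<le> lo i" for i using cd L by (simp add: lo_def)
  have lo_le: "lo i \<le> d" for i by (simp add: lo_def)
  have lo_mono: "lo i \<le> lo (Suc i)" for i using L by (simp add: lo_def algebra_simps)
  have lo_step: "lo (Suc i) - lo i \<le> L" for i using L by (auto simp: lo_def algebra_simps min_def)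
  have HF: "(LINT x:{c..y}|lborel. H x) = G y" if "y \<le> d" for y
    unfolding G_def F_def using that
    by (intro set_lebesgue_integral_cong) (auto simp: indicator_def)
  have tele: "(LINT x:{c..lo k}|lborel. f x) = (\<Sum>i<k. LINT x:{lo i..lo (Suc i)}|lborel. f x)"
    if fi: "set_integrable lborel {c..d} f" for f :: "real \<Rightarrow> real" and k
  proof (induction k)
    case 0
    then show ?case by (simp add: lo0 set_integral_singleton)
  next
    case (Suc k)
    have "(LINT x:{c..lo (Suc k)}|lborel. f x) = (LINT x:{c..lo k}|lborel. f x) + (LINT x:{lo k..lo (Suc k)}|lborel. f x)"
      using lo_le[of "Suc k"] by (intro Icc_split) (auto intro!: set_integrable_subset[OF fi] simp: lo_ge lo_mono)
    then show ?case using Suc by simp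
  qed
  define m where "m i = (LINT x:{lo i..lo (Suc i)}|lborel. H x)" for i
  define u where "u i = (LINT x:{lo i..lo (Suc i)}|lborel. f1 x)" for i
  define v where "v i = (LINT x:{lo i..lo (Suc i)}|lborel. f2 x)" for i
  have m0: "0 \<le> m i" for i unfolding m_def H_def by (rule set_integral_nonneg') simp
  have mle: "m i \<le> \<delta>" for i
  proof -
    have "G (lo (Suc i)) = G (lo i) + m i"
    proof -
      have "set_integrable lborel {c..lo (Suc i)} H"
        using lo_le[of "Suc i"] by (intro set_integrable_subset[OF iH]) auto
      then show ?thesis
        using Icc_split[of c "lo i" "lo (Suc i)" H] HF[of "lo i"] HF[of "lo (Suc i)"] lo_ge lo_mono lo_le
        by (simp add: m_def)
    qed
    moreover have "dist (G (lo (Suc i))) (G (lo i)) < \<delta>"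
      using L0(2)[of "lo i" "lo (Suc i)"] lo_ge lo_le lo_step[of i] lo_mono[of i] L
      by (auto simp: dist_real_def)
    ultimately show ?thesis by (simp add: dist_real_def)
  qed
  have uvm: "\<bar>u i\<bar> + \<bar>v i\<bar> \<le> m i" for i
  proof -
    have s1: "set_integrable lborel {lo i..lo (Suc i)} f1" "set_integrable lborel {lo i..lo (Suc i)} f2"
      using lo_ge[of i] lo_le[of "Suc i"] by (auto intro!: set_integrable_subset[OF i1] set_integrable_subset[OF i2])
    have "m i = (LINT x:{lo i..lo (Suc i)}|lborel. \<bar>f1 x\<bar>) + (LINT x:{lo i..lo (Suc i)}|lborel. \<bar>f2 x\<bar>)"
      unfolding m_def H_def using s1 by (simp add: set_integral_add set_integrable_abs)
    then show ?thesis unfolding u_def v_def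
      using set_integral_abs_le[of "{lo i..lo (Suc i)}" f1] set_integral_abs_le[of "{lo i..lo (Suc i)}" f2]
      by linarith
  qed
  have sum_m: "(\<Sum>i<k. m i) \<le> M" for k
  proof -
    have "(\<Sum>i<k. m i) = (LINT x:{c..lo k}|lborel. H x)" unfolding m_def using tele[OF iH] by simp
    also have "\<dots> \<le> M"
    proof -
      have "M = (LINT x:{c..lo k}|lborel. H x) + (LINT x:{lo k..d}|lborel. H x)"
        unfolding M_def by (rule Icc_split) (auto simp: lo_ge lo_le iH)
      moreover have "0 \<le> (LINT x:{lo k..d}|lborel. H x)" unfolding H_def by (rule set_integral_nonneg') simp
      ultimately show ?thesis by simp
    qed
    finally show ?thesis .
  qed
  obtain e where e1: "\<And>i. \<bar>e i\<bar> = 1"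
    and e2: "\<And>k. (\<Sum>i<k. e i * u i)\<^sup>2 + (\<Sum>i<k. e i * v i)\<^sup>2 \<le> (\<Sum>i<k. (u i)\<^sup>2 + (v i)\<^sup>2)"
    using greedy_sign[of u v] by blast
  define s where "s x = e (nat \<lfloor>(x - c) / L\<rfloor>)" for x
  have sm: "s \<in> borel_measurable borel" unfolding s_def by (rule s_meas)
  have s1: "\<bar>s x\<bar> = 1" for x by (simp add: s_def e1)
  have s1': "\<bar>s x\<bar> \<le> 1" for x by (simp add: s1)
  have s_piece: "s x = e i" if "lo i < x" "x < lo (Suc i)" for x i
  proof -
    have "x < c + (real i + 1) * L" using that by (simp add: lo_def add.commute)
    moreover have "c + real i * L < x" using that lo_le[of "Suc i"] by (auto simp: lo_def)
    ultimately have "real i < (x - c) / L" "(x - c) / L < real i + 1" using L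
      by (simp_all add: field_simps)
    then have "\<lfloor>(x - c) / L\<rfloor> = int i" by (intro floor_unique) simp_all
    then show ?thesis by (simp add: s_def)
  qed
  have main: "\<bar>LINT x:{c..y}|lborel. s x * f x\<bar> \<le> \<eta>"
    if fi: "set_integrable lborel {c..d} f" and fH: "\<And>x. \<bar>f x\<bar> \<le> H x"
      and w: "\<And>k. (\<Sum>i<k. e i * w i)\<^sup>2 \<le> (\<Sum>i<k. m i * m i)"
      and wdef: "\<And>i. w i = (LINT x:{lo i..lo (Suc i)}|lborel. f x)"
      and y: "y \<in> {c..d}" for f :: "real \<Rightarrow> real" and w y
  proof -
    have sfi: "set_integrable lborel {c..d} (\<lambda>x. s x * f x)" by (rule sint_mult[OF sm s1' fi])
    have piece: "(LINT x:{lo i..lo (Suc i)}|lborel. s x * f x) = e i * w i" for i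
    proof -
      have "(LINT x:{lo i..lo (Suc i)}|lborel. s x * f x) = (LINT x:{lo i<..<lo (Suc i)}|lborel. s x * f x)"
        by (rule set_integral_discrete_difference[where X="{lo i, lo (Suc i)}"]) auto
      also have "\<dots> = (LINT x:{lo i<..<lo (Suc i)}|lborel. e i * f x)"
        by (rule set_lebesgue_integral_cong) (auto simp: s_piece)
      also have "\<dots> = e i * (LINT x:{lo i<..<lo (Suc i)}|lborel. f x)" by simp
      also have "(LINT x:{lo i<..<lo (Suc i)}|lborel. f x) = w i"
        unfolding wdef by (rule set_integral_discrete_difference[where X="{lo i, lo (Suc i)}"]) auto
      finally show ?thesis .
    qed
    define k where "k = nat \<lfloor>(y - c) / L\<rfloor>"
    have yk: "lo k \<le> y" "y \<le> lo (Suc k)"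
    proof -
      have "0 \<le> (y - c) / L" using y L by simp
      then have k1: "real k \<le> (y - c) / L" "(y - c) / L < real k + 1"
        unfolding k_def by linarith+
      then have "c + real k * L \<le> y" "y < c + (real k + 1) * L" using L by (simp_all add: field_simps)
      then show "lo k \<le> y" "y \<le> lo (Suc k)" using y by (auto simp: lo_def add.commute)
    qed
    have split: "(LINT x:{c..y}|lborel. s x * f x) = (LINT x:{c..lo k}|lborel. s x * f x) + (LINT x:{lo k..y}|lborel. s x * f x)"
      using yk y lo_ge[of k] by (intro Icc_split) (auto intro!: set_integrable_subset[OF sfi])
    have A: "(LINT x:{c..lo k}|lborel. s x * f x) = (\<Sum>i<k. e i * w i)"
      using tele[OF sfi, of k] piece by simp
    have "(\<Sum>i<k. e i * w i)\<^sup>2 \<le> (\<Sum>i<k. m i * m i)" by (rule w)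
    also have "\<dots> \<le> (\<Sum>i<k. \<delta> * m i)" by (intro sum_mono mult_right_mono mle m0)
    also have "\<dots> = \<delta> * (\<Sum>i<k. m i)" by (simp add: sum_distrib_left)
    also have "\<dots> \<le> \<delta> * M" by (intro mult_left_mono sum_m) (use d0 in simp)
    also have "\<dots> \<le> (\<eta>\<^sup>2 / (4 * (M + 1))) * M" by (intro mult_right_mono M0) (simp add: \<delta>_def)
    also have "\<dots> \<le> (\<eta>/2)\<^sup>2"
    proof -
      have "(\<eta>\<^sup>2 / (4 * (M + 1))) * M = (\<eta>/2)\<^sup>2 * (M / (M + 1))" using M0 by (simp add: field_simps power2_eq_square)
      also have "\<dots> \<le> (\<eta>/2)\<^sup>2 * 1" using M0 by (intro mult_left_mono) simp_all
      finally show ?thesis by simp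
    qed
    finally have "(\<Sum>i<k. e i * w i)\<^sup>2 \<le> (\<eta>/2)\<^sup>2" .
    then have "\<bar>\<Sum>i<k. e i * w i\<bar> \<le> \<bar>\<eta>/2\<bar>" by (simp only: abs_le_square_iff)
    then have "\<bar>\<Sum>i<k. e i * w i\<bar> \<le> \<eta>/2" using eta by simp
    moreover have "\<bar>LINT x:{lo k..y}|lborel. s x * f x\<bar> \<le> \<eta>/2"
    proof -
      have "\<bar>LINT x:{lo k..y}|lborel. s x * f x\<bar> \<le> (LINT x:{lo k..y}|lborel. \<bar>s x * f x\<bar>)"
        by (rule set_integral_abs_le)
      also have "\<dots> \<le> (LINT x:{lo k..y}|lborel. H x)"
        using yk y lo_ge[of k]
        by (intro set_integral_mono set_integrable_abs) (auto simp: abs_mult s1 fH intro!: set_integrable_subset[OF sfi] set_integrable_subset[OF iH])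
      also have "\<dots> \<le> m k"
      proof -
        have "m k = (LINT x:{lo k..y}|lborel. H x) + (LINT x:{y..lo (Suc k)}|lborel. H x)"
          unfolding m_def using yk lo_ge[of k] lo_le[of "Suc k"]
          by (intro Icc_split) (auto intro!: set_integrable_subset[OF iH])
        moreover have "0 \<le> (LINT x:{y..lo (Suc k)}|lborel. H x)" unfolding H_def by (rule set_integral_nonneg') simp
        ultimately show ?thesis by simp
      qed
      also have "\<dots> \<le> \<eta>/2" using mle[of k] by (simp add: \<delta>_def)
      finally show ?thesis .
    qed
    ultimately show ?thesis using split A abs_triangle_ineq[of "\<Sum>i<k. e i * w i" "LINT x:{lo k..y}|lborel. s x * f x"] by linarith
  qed
  have uvsq: "(u i)\<^sup>2 + (v i)\<^sup>2 \<le> m i * m i" for i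
  proof -
    have "(u i)\<^sup>2 + (v i)\<^sup>2 \<le> (\<bar>u i\<bar> + \<bar>v i\<bar>)\<^sup>2" unfolding power2_sum power2_abs by simp
    also have "\<dots> \<le> (m i)\<^sup>2" using uvm[of i] by (intro power_mono) simp_all
    also have "\<dots> = m i * m i" by (simp add: power2_eq_square)
    finally show ?thesis .
  qed
  have sm2: "(\<Sum>i<k. (u i)\<^sup>2 + (v i)\<^sup>2) \<le> (\<Sum>i<k. m i * m i)" for k
    by (rule sum_mono) (rule uvsq)
  have wu: "(\<Sum>i<k. e i * u i)\<^sup>2 \<le> (\<Sum>i<k. m i * m i)" for k
  proof -
    have "0 \<le> (\<Sum>i<k. e i * v i)\<^sup>2" by simp
    then show ?thesis using e2[of k] sm2[of k] by linarith
  qed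
  have wv: "(\<Sum>i<k. e i * v i)\<^sup>2 \<le> (\<Sum>i<k. m i * m i)" for k
  proof -
    have "0 \<le> (\<Sum>i<k. e i * u i)\<^sup>2" by simp
    then show ?thesis using e2[of k] sm2[of k] by linarith
  qed
  show ?thesis
  proof (intro exI[of _ s] conjI allI ballI)
    show "s \<in> borel_measurable borel" by (rule sm)
    show "\<bar>s x\<bar> = 1" for x by (rule s1)
    fix y assume y: "y \<in> {c..d}"
    show "\<bar>LINT x:{c..y}|lborel. s x * f1 x\<bar> \<le> \<eta>"
      by (rule main[OF i1 _ wu u_def y]) (simp add: H_def)
    show "\<bar>LINT x:{c..y}|lborel. s x * f2 x\<bar> \<le> \<eta>"
      by (rule main[OF i2 _ wv v_def y]) (simp add: H_def)
  qed
qed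

lemma abs_cont_cont:
  assumes "abs_cont_on S f"
  shows "continuous_on S f"
  unfolding continuous_on_iff
proof (intro ballI allI impI)
  fix x e :: real assume x: "x \<in> S" and e: "0 < e"
  obtain \<delta> where d: "\<delta> > 0" and H: "\<forall>(n::nat) (xs::nat\<Rightarrow>real) ys.
      (\<forall>i<n. xs i \<le> ys i \<and> xs i \<in> S \<and> ys i \<in> S) \<longrightarrow>
      (\<forall>i. Suc i < n \<longrightarrow> ys i \<le> xs (Suc i)) \<longrightarrow>
      (\<Sum>i<n. ys i - xs i) < \<delta> \<longrightarrow> (\<Sum>i<n. \<bar>f (ys i) - f (xs i)\<bar>) < e"
    using assms e unfolding abs_cont_on_def by blast
  show "\<exists>d>0. \<forall>x'\<in>S. dist x' x < d \<longrightarrow> dist (f x') (f x) < e"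
  proof (intro exI[of _ \<delta>] conjI ballI impI d)
    fix x' assume x': "x' \<in> S" and dx: "dist x' x < \<delta>"
    have "max x x' - min x x' < \<delta>" using dx by (auto simp: dist_real_def min_def max_def abs_if split: if_splits)
    moreover have "min x x' \<le> max x x' \<and> min x x' \<in> S \<and> max x x' \<in> S" using x x' by (simp add: min_def max_def)
    ultimately have "\<bar>f (max x x') - f (min x x')\<bar> < e"
      using H[rule_format, of "Suc 0" "\<lambda>_. min x x'" "\<lambda>_. max x x'"] by simp
    then show "dist (f x') (f x) < e"
      by (cases "x \<le> x'") (auto simp: dist_real_def min_def max_def abs_minus_commute)
  qed
qed

lemma cont_bdd:
  fixes f :: "real \<Rightarrow> real"
  assumes "continuous_on {\<alpha>..\<beta>} f"
  shows "\<exists>B. \<forall>x\<in>{\<alpha>..\<beta>}. \<bar>f x\<bar> \<le> B"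
proof -
  have "bounded (f ` {\<alpha>..\<beta>})"
    by (intro compact_imp_bounded compact_continuous_image assms compact_Icc)
  then show ?thesis unfolding bounded_real by auto
qed

lemma set_integrable_cont_mult:
  fixes h \<phi> :: "real \<Rightarrow> real"
  assumes h: "set_integrable lborel {c..d} h" and phi: "continuous_on {c..d} \<phi>"
  shows "set_integrable lborel {c..d} (\<lambda>x. h x * \<phi> x)"
proof -
  obtain B where B: "\<And>x. x \<in> {c..d} \<Longrightarrow> \<bar>\<phi> x\<bar> \<le> B" using cont_bdd[OF phi] by blast
  have i: "set_integrable lborel {c..d} (\<lambda>x. B * h x)" using h by simp
  have m1: "(\<lambda>x. indicator {c..d} x *\<^sub>R h x) \<in> borel_measurable borel"
    using borel_measurable_integrable[OF h[unfolded set_integrable_def]] by simp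
  have m2: "(\<lambda>x. indicator {c..d} x *\<^sub>R \<phi> x) \<in> borel_measurable borel"
    by (rule borel_measurable_continuous_on_indicator[OF _ phi]) simp
  show ?thesis
  proof (rule set_integrable_bound[OF i])
    have eq: "(\<lambda>x. indicator {c..d} x *\<^sub>R (h x * \<phi> x)) = (\<lambda>x. (indicator {c..d} x *\<^sub>R h x) * (indicator {c..d} x *\<^sub>R \<phi> x))"
      by (auto simp: indicator_def fun_eq_iff)
    show "set_borel_measurable lborel {c..d} (\<lambda>x. h x * \<phi> x)"
      unfolding set_borel_measurable_def eq measurable_lborel2 using m1 m2 by measurable
    show "AE x in lborel. x \<in> {c..d} \<longrightarrow> norm (h x * \<phi> x) \<le> norm (B * h x)"
    proof (intro AE_I2 impI)
      fix x assume x: "x \<in> {c..d}"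
      have "\<bar>h x\<bar> * \<bar>\<phi> x\<bar> \<le> \<bar>h x\<bar> * B" by (rule mult_left_mono[OF B[OF x]]) simp
      moreover have "0 \<le> B" using B[OF x] by simp
      ultimately show "norm (h x * \<phi> x) \<le> norm (B * h x)" by (simp add: abs_mult mult.commute)
    qed
  qed
qed

lemma conv_interval:
  fixes I :: "real set"
  assumes sub: "I \<subseteq> {c..d}" and cd: "c \<le> d"
    and conv: "\<And>x y z. x \<in> I \<Longrightarrow> z \<in> I \<Longrightarrow> x \<le> y \<Longrightarrow> y \<le> z \<Longrightarrow> y \<in> I"
  shows "\<exists>l r. c \<le> l \<and> l \<le> r \<and> r \<le> d \<and> (\<forall>x. x \<noteq> l \<longrightarrow> x \<noteq> r \<longrightarrow> (x \<in> I \<longleftrightarrow> l \<le> x \<and> x \<le> r))"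
proof (cases "I = {}")
  case True
  then show ?thesis using cd by (intro exI[of _ c]) auto
next
  case False
  have bb: "bdd_below I" "bdd_above I" using sub by (auto intro!: bdd_belowI[of _ c] bdd_aboveI[of _ d])
  define l where "l = Inf I"
  define r where "r = Sup I"
  have lI: "\<And>x. x \<in> I \<Longrightarrow> l \<le> x" unfolding l_def using bb by (auto intro: cInf_lower)
  have rI: "\<And>x. x \<in> I \<Longrightarrow> x \<le> r" unfolding r_def using bb by (auto intro: cSup_upper)
  obtain x0 where x0: "x0 \<in> I" using False by blast
  have "c \<le> l" unfolding l_def using False sub by (intro cInf_greatest) auto
  moreover have "r \<le> d" unfolding r_def using False sub by (intro cSup_least) auto
  moreover have "l \<le> r" using lI[OF x0] rI[OF x0] by simp
  moreover have "x \<in> I \<longleftrightarrow> l \<le> x \<and> x \<le> r" if "x \<noteq> l" "x \<noteq> r" for x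
  proof
    assume "x \<in> I" then show "l \<le> x \<and> x \<le> r" using lI rI by simp
  next
    assume "l \<le> x \<and> x \<le> r"
    then have "l < x" "x < r" using that by auto
    obtain y where "y \<in> I" "y < x" using \<open>l < x\<close> False bb unfolding l_def by (auto simp: cInf_less_iff)
    moreover obtain z where "z \<in> I" "x < z" using \<open>x < r\<close> False bb unfolding r_def by (auto simp: less_cSup_iff)
    ultimately show "x \<in> I" using conv[of y z x] by simp
  qed
  ultimately show ?thesis by blast
qed

lemma ennpow_le:
  assumes "x \<le> ennreal X" "0 \<le> X" "0 \<le> r"
  shows "ennpow x r \<le> ennreal (X powr r)"
proof -
  have "x < \<infinity>" using le_less_trans[OF assms(1) ennreal_less_top] by simp
  then have xi: "x \<noteq> \<infinity>" by simp
  have "enn2real x \<le> enn2real (ennreal X)"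
    by (rule enn2real_mono[OF assms(1)]) simp
  then have ex: "enn2real x \<le> X" using assms(2) by simp
  have "ennpow x r = ennreal (enn2real x powr r)" using xi by (simp add: ennpow_def)
  also have "\<dots> \<le> ennreal (X powr r)"
    by (rule ennreal_leI, rule powr_mono2[OF assms(3) _ ex]) simp
  finally show ?thesis .
qed

lemma nn_bound:
  fixes F w :: "real \<Rightarrow> real" and q Y \<alpha> \<beta> :: real
  assumes q: "0 < q" and Y: "0 \<le> Y" and wi: "set_integrable lborel {\<alpha>..\<beta>} w"
    and w0: "\<And>t. 0 \<le> w t"
    and F: "\<And>t. 0 < t \<Longrightarrow> F t \<le> indicator {\<alpha>..\<beta>} t * w t * Y powr q"
  shows "ennpow (\<integral>\<^sup>+t\<in>{0<..}. ennreal (F t) \<partial>lborel) (1 / q) \<le> ennreal (Y * (LINT t:{\<alpha>..\<beta>}|lborel. w t) powr (1 / q))"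
proof -
  define Iw where "Iw = (LINT t:{\<alpha>..\<beta>}|lborel. w t)"
  have Iw0: "0 \<le> Iw" unfolding Iw_def set_lebesgue_integral_def
    by (rule Bochner_Integration.integral_nonneg) (simp add: w0)
  have "(\<integral>\<^sup>+t\<in>{0<..}. ennreal (F t) \<partial>lborel) \<le> (\<integral>\<^sup>+t. ennreal (Y powr q * (indicator {\<alpha>..\<beta>} t *\<^sub>R w t)) \<partial>lborel)"
  proof (rule nn_integral_mono)
    fix t
    show "ennreal (F t) * indicator {0<..} t \<le> ennreal (Y powr q * (indicator {\<alpha>..\<beta>} t *\<^sub>R w t))"
      using F[of t] by (cases "0 < t") (auto simp: indicator_def mult.commute ennreal_neg intro: ennreal_leI)
  qed
  also have "\<dots> = ennreal (Y powr q * Iw)"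
  proof -
    have "integrable lborel (\<lambda>t. Y powr q * (indicator {\<alpha>..\<beta>} t *\<^sub>R w t))"
      using wi unfolding set_integrable_def by simp
    then have "(\<integral>\<^sup>+t. ennreal (Y powr q * (indicator {\<alpha>..\<beta>} t *\<^sub>R w t)) \<partial>lborel) = ennreal (integral\<^sup>L lborel (\<lambda>t. Y powr q * (indicator {\<alpha>..\<beta>} t *\<^sub>R w t)))"
      by (intro nn_integral_eq_integral) (auto simp: w0)
    then show ?thesis unfolding Iw_def set_lebesgue_integral_def by simp
  qed
  finally have "ennpow (\<integral>\<^sup>+t\<in>{0<..}. ennreal (F t) \<partial>lborel) (1 / q) \<le> ennreal ((Y powr q * Iw) powr (1/q))"
    using q Iw0 by (intro ennpow_le) auto
  also have "(Y powr q * Iw) powr (1/q) = Y * Iw powr (1/q)"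
    using q Y Iw0 by (simp add: powr_mult powr_powr)
  finally show ?thesis unfolding Iw_def .
qed

lemma wint_lemma:
  fixes v :: "real \<Rightarrow> real"
  assumes v: "inv_Lloc r v" and al: "0 < \<alpha>"
  shows "set_integrable lborel {\<alpha>..\<beta>} (\<lambda>x. \<bar>1 / v x\<bar> powr r)"
proof (cases "\<alpha> \<le> \<beta>")
  case False
  then have "{\<alpha>..\<beta>} = {}" by auto
  then show ?thesis by (simp add: set_integrable_def)
next
  case True
  from v have m: "(\<lambda>x. indicator {0<..} x * (1 / v x)) \<in> borel_measurable borel"
    and fin: "(\<integral>\<^sup>+x\<in>{\<alpha>..\<beta>}. ennreal (\<bar>1 / v x\<bar> powr r) \<partial>lborel) < \<infinity>"
    unfolding inv_Lloc_def Lloc_def using al True by auto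
  have eq: "(\<lambda>x. indicator {\<alpha>..\<beta>} x *\<^sub>R (\<bar>1 / v x\<bar> powr r)) = (\<lambda>x. indicator {\<alpha>..\<beta>} x * (\<bar>indicator {0<..} x * (1 / v x)\<bar> powr r))"
    using al by (auto simp: fun_eq_iff indicator_def)
  show ?thesis
    unfolding set_integrable_def
  proof (subst integrable_iff_bounded, intro conjI)
    show "(\<lambda>x. indicator {\<alpha>..\<beta>} x *\<^sub>R (\<bar>1 / v x\<bar> powr r)) \<in> borel_measurable lborel"
      unfolding eq measurable_lborel2 using m by measurable
    have "(\<integral>\<^sup>+x. ennreal (norm (indicator {\<alpha>..\<beta>} x *\<^sub>R (\<bar>1 / v x\<bar> powr r))) \<partial>lborel)
        = (\<integral>\<^sup>+x\<in>{\<alpha>..\<beta>}. ennreal (\<bar>1 / v x\<bar> powr r) \<partial>lborel)"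
      by (intro nn_integral_cong) (auto simp: indicator_def)
    then show "(\<integral>\<^sup>+x. ennreal (norm (indicator {\<alpha>..\<beta>} x *\<^sub>R (\<bar>1 / v x\<bar> powr r))) \<partial>lborel) < \<infinity>"
      using fin by simp
  qed
qed

lemma mono_pos:
  fixes a :: "real \<Rightarrow> real"
  assumes a_mono: "strict_mono_on {0<..} a" and a_0: "(a \<longlongrightarrow> 0) (at_right 0)" and t: "0 < t"
  shows "0 < a t"
proof (rule ccontr)
  assume "\<not> 0 < a t"
  then have neg: "a (t/2) < 0" using strict_mono_onD[OF a_mono, of "t/2" t] t by simp
  have "eventually (\<lambda>s. a (t/2) < a s) (at_right 0)"
    by (rule order_tendstoD(1)[OF a_0 neg])
  then obtain b where b: "b > 0" "\<And>y. 0 < y \<Longrightarrow> y < b \<Longrightarrow> a (t/2) < a y"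
    unfolding eventually_at_right_field by blast
  define y where "y = min b (t/2) / 2"
  have y: "0 < y" "y < b" "y < t/2" using b t by (auto simp: y_def)
  have "a y < a (t/2)" using strict_mono_onD[OF a_mono, of y "t/2"] y t by simp
  with b(2)[OF y(1,2)] show False by simp
qed

lemma mono_surj:
  fixes a :: "real \<Rightarrow> real"
  assumes a_mono: "strict_mono_on {0<..} a" and a_0: "(a \<longlongrightarrow> 0) (at_right 0)"
    and a_cont: "\<And>\<alpha> \<beta>. 0 < \<alpha> \<Longrightarrow> continuous_on {\<alpha>..\<beta>} a"
    and t: "0 < t" "t < a c" and c: "0 < c"
  shows "inv_into {0<..} a t < c"
proof -
  have "eventually (\<lambda>s. a s < t) (at_right 0)"
    by (rule order_tendstoD(2)[OF a_0 t(1)])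
  then obtain b where b: "b > 0" "\<And>y. 0 < y \<Longrightarrow> y < b \<Longrightarrow> a y < t"
    unfolding eventually_at_right_field by blast
  define s where "s = min b c / 2"
  have s: "0 < s" "s < b" "s < c" using b c by (auto simp: s_def)
  have "\<exists>x. s \<le> x \<and> x \<le> c \<and> a x = t"
    using b(2)[OF s(1,2)] t s by (intro IVT' a_cont) auto
  then obtain x where x: "s \<le> x" "x \<le> c" "a x = t" by blast
  then have "t \<in> a ` {0<..}" using s by force
  then have u: "inv_into {0<..} a t \<in> {0<..}" "a (inv_into {0<..} a t) = t"
    using inv_into_into[of t a "{0<..}"] f_inv_into_f[of t a "{0<..}"] by auto
  show ?thesis
  proof (rule ccontr)
    assume "\<not> inv_into {0<..} a t < c"
    then have "a c \<le> a (inv_into {0<..} a t)"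
      using c u by (intro strict_mono_on_leD[OF a_mono]) auto
    then show False using u t by simp
  qed
qed

lemma set_integral_zero':
  fixes F :: "real \<Rightarrow> real"
  assumes "\<And>x. x \<in> A \<Longrightarrow> F x = 0"
  shows "(LINT x:A|lborel. F x) = 0"
proof -
  have "(\<lambda>x. indicator A x *\<^sub>R F x) = (\<lambda>x. 0)" using assms by (auto simp: fun_eq_iff indicator_def)
  then show ?thesis by (simp add: set_lebesgue_integral_def)
qed

theorem lemma2p8:
  fixes p :: real and v0 v1 a b h :: "real \<Rightarrow> real" and c d :: real
  assumes p: "1 < p"
    and v0: "Vclass p v0" and v1: "Vclass p v1" and v1inv: "inv_Lloc (conj_exp p) v1"
    and c0: "\<exists>c0>0.
        Lnorm (conj_exp p) (\<lambda>x. 1 / v1 x) {0<..<c0} * Lnorm p v0 {0<..<c0} = \<infinity> \<and>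
        Lnorm (conj_exp p) (\<lambda>x. 1 / v1 x) {c0<..} * Lnorm p v0 {c0<..} = \<infinity>"
    and a_mono: "strict_mono_on {0<..} a" and b_mono: "strict_mono_on {0<..} b"
    and a_ac: "loc_abs_cont a" and b_ac: "loc_abs_cont b"
    and a_0: "(a \<longlongrightarrow> 0) (at_right 0)" and b_0: "(b \<longlongrightarrow> 0) (at_right 0)"
    and a_inf: "filterlim a at_top at_top" and b_inf: "filterlim b at_top at_top"
    and ab: "\<And>t. t > 0 \<Longrightarrow> a t < t \<and> t < b t"
    and ab_eq: "\<And>t. t > 0 \<Longrightarrow>
        (LINT x:{a t..t}|lborel. wgt p v1 x) = (LINT x:{t..b t}|lborel. wgt p v1 x)"
    and ab_one: "\<And>t. t > 0 \<Longrightarrow>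
        (LINT x:{a t..b t}|lborel. wgt p v1 x) powr (1 / conj_exp p) *
        (LINT x:{a t..b t}|lborel. \<bar>v0 x\<bar> powr p) powr (1 / p) = 1"
    and cd: "0 < c" "c \<le> d"
    and h: "set_integrable lborel {c..d} h"
  shows "\<forall>\<epsilon>>0. \<exists>g \<in> Wspace p v1 a.
           (\<forall>x\<in>{c..d}. \<bar>g x\<bar> = \<bar>h x\<bar>) \<and> Wnorm p v1 a b g < ennreal \<epsilon>"
proof (intro allI impI)
  fix \<epsilon> :: real assume eps: "\<epsilon> > 0"
  define q where "q = conj_exp p"
  have q1: "1 < q" using p by (simp add: q_def conj_exp_def field_simps)
  define w where "w = wgt p v1"
  have w0: "\<And>x. 0 \<le> w x" by (simp add: w_def wgt_def)
  have wint: "\<And>\<alpha> \<beta>. 0 < \<alpha> \<Longrightarrow> set_integrable lborel {\<alpha>..\<beta>} w"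
    unfolding w_def wgt_def[abs_def] by (rule wint_lemma[OF v1inv])
  define V where "V = V1fun p v1 a b"
  have a_le: "\<And>x y. 0 < x \<Longrightarrow> x \<le> y \<Longrightarrow> a x \<le> a y"
    using strict_mono_on_leD[OF a_mono] by auto
  have a_cont: "\<And>\<alpha> \<beta>. 0 < \<alpha> \<Longrightarrow> continuous_on {\<alpha>..\<beta>} a"
  proof -
    fix \<alpha> \<beta> :: real assume al: "0 < \<alpha>"
    show "continuous_on {\<alpha>..\<beta>} a"
    proof (cases "\<alpha> \<le> \<beta>")
      case True show ?thesis by (rule abs_cont_cont[OF a_ac[unfolded loc_abs_cont_def, rule_format, OF al True]])
    qed simp
  qed
  have b_cont: "\<And>\<alpha> \<beta>. 0 < \<alpha> \<Longrightarrow> continuous_on {\<alpha>..\<beta>} b"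
  proof -
    fix \<alpha> \<beta> :: real assume al: "0 < \<alpha>"
    show "continuous_on {\<alpha>..\<beta>} b"
    proof (cases "\<alpha> \<le> \<beta>")
      case True show ?thesis by (rule abs_cont_cont[OF b_ac[unfolded loc_abs_cont_def, rule_format, OF al True]])
    qed simp
  qed
  have a_pos: "\<And>t. 0 < t \<Longrightarrow> 0 < a t" using mono_pos[OF a_mono a_0] by blast
  have c0: "0 < c" using cd by simp
  have ac0: "0 < a c" using a_pos[OF c0] .
  have acc: "a c < c" using ab[OF c0] by simp
  have ui_lt: "\<And>t. 0 < t \<Longrightarrow> t < a c \<Longrightarrow> inv_into {0<..} a t < c"
    using mono_surj[OF a_mono a_0 a_cont _ _ c0] by blast
  have Wcont: "\<And>\<alpha>. 0 < \<alpha> \<Longrightarrow> continuous_on UNIV (\<lambda>y. LINT s:{\<alpha>..y}|lborel. w s)"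
    by (rule continuous_on_LBINT) (rule wint)
  have Wsplit: "\<And>\<alpha> y z. 0 < \<alpha> \<Longrightarrow> \<alpha> \<le> y \<Longrightarrow> y \<le> z \<Longrightarrow>
      (LINT s:{y..z}|lborel. w s) = (LINT s:{\<alpha>..z}|lborel. w s) - (LINT s:{\<alpha>..y}|lborel. w s)"
  proof -
    fix \<alpha> y z :: real assume h: "0 < \<alpha>" "\<alpha> \<le> y" "y \<le> z"
    show "(LINT s:{y..z}|lborel. w s) = (LINT s:{\<alpha>..z}|lborel. w s) - (LINT s:{\<alpha>..y}|lborel. w s)"
      using Icc_split[OF h(2,3) wint[OF h(1)]] by simp
  qed
  have Vcont: "\<And>\<alpha> \<beta>. 0 < \<alpha> \<Longrightarrow> continuous_on {\<alpha>..\<beta>} V"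
  proof -
    fix \<alpha> \<beta> :: real assume al: "0 < \<alpha>"
    define W0 where "W0 y = (LINT s:{a \<alpha>..y}|lborel. w s)" for y
    have a0: "0 < a \<alpha>" using a_pos[OF al] .
    have "continuous_on {\<alpha>..\<beta>} (\<lambda>x. W0 (b x) - W0 (a x))"
      unfolding W0_def
      by (intro continuous_on_diff continuous_on_compose2[OF Wcont[OF a0] b_cont[OF al]]
            continuous_on_compose2[OF Wcont[OF a0] a_cont[OF al]]) auto
    moreover have eqV: "V x = W0 (b x) - W0 (a x)" if x: "x \<in> {\<alpha>..\<beta>}" for x
    proof -
      have x0: "0 < x" using x al by simp
      have h1: "a \<alpha> \<le> a x" using a_le[OF al] x by simp
      have h2: "a x \<le> b x" using ab[OF x0] by simp
      have "V x = (LINT s:{a x..b x}|lborel. w s)" unfolding V_def V1fun_def w_def ..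
      also have "\<dots> = W0 (b x) - W0 (a x)" unfolding W0_def by (rule Wsplit[OF a0 h1 h2])
      finally show ?thesis .
    qed
    moreover have "continuous_on {\<alpha>..\<beta>} V = continuous_on {\<alpha>..\<beta>} (\<lambda>x. W0 (b x) - W0 (a x))"
      by (rule continuous_on_cong) (simp_all add: eqV)
    ultimately show "continuous_on {\<alpha>..\<beta>} V" by simp
  qed
  have Vpos: "\<And>x. 0 < x \<Longrightarrow> 0 < V x"
  proof -
    fix x :: real assume x: "0 < x"
    have "0 \<le> V x" unfolding V_def V1fun_def by (rule set_integral_nonneg') (simp add: wgt_def)
    moreover have "V x \<noteq> 0"
    proof
      assume "V x = 0"
      then show False using ab_one[OF x] by (simp add: V_def V1fun_def)
    qed
    ultimately show "0 < V x" by simp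
  qed
  define W where "W y = (LINT s:{a c..y}|lborel. w s)" for y
  have Wc: "continuous_on UNIV W" unfolding W_def by (rule Wcont[OF ac0])
  have Vc_cd: "continuous_on {c..d} V" by (rule Vcont[OF c0])
  have Vnz: "\<forall>x\<in>{c..d}. V x \<noteq> 0"
  proof
    fix x assume "x \<in> {c..d}"
    then have "0 < x" using c0 by simp
    then show "V x \<noteq> 0" using Vpos[of x] by simp
  qed
  define f1 where "f1 x = h x * (1 / V x)" for x
  define f2 where "f2 x = h x * (W (a x) / V x)" for x
  have phi1: "continuous_on {c..d} (\<lambda>x. 1 / V x)"
    by (rule continuous_on_divide[OF continuous_on_const Vc_cd Vnz])
  have phi2: "continuous_on {c..d} (\<lambda>x. W (a x) / V x)"
    by (rule continuous_on_divide[OF continuous_on_compose2[OF Wc a_cont[OF c0]] Vc_cd Vnz]) simp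
  have i1: "set_integrable lborel {c..d} f1" unfolding f1_def by (rule set_integrable_cont_mult[OF h phi1])
  have i2: "set_integrable lborel {c..d} f2" unfolding f2_def by (rule set_integrable_cont_mult[OF h phi2])
  have acd: "a c \<le> d" using acc cd by simp
  obtain BW where BW: "\<forall>t\<in>{a c..d}. \<bar>W t\<bar> \<le> BW"
    using cont_bdd[OF continuous_on_subset[OF Wc subset_UNIV]] by blast
  obtain BV where BV: "\<forall>t\<in>{a c..d}. \<bar>V t\<bar> \<le> BV"
    using cont_bdd[OF Vcont[OF ac0]] by blast
  have BW0: "0 \<le> BW" using BW acd by force
  have BV0: "0 \<le> BV" using BV acd by force
  define Iw where "Iw = (LINT t:{a c..d}|lborel. w t)"
  define Iq where "Iq = Iw powr (1/q)"
  have Iq0: "0 \<le> Iq" by (simp add: Iq_def)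
  define \<eta> where "\<eta> = \<epsilon> / (4 * (BW + BV + 1) * (Iq + 1))"
  have eta0: "0 < \<eta>" unfolding \<eta>_def using eps BW0 BV0 Iq0 by (intro divide_pos_pos mult_pos_pos) auto
  obtain s where s_meas: "s \<in> borel_measurable borel" and s1: "\<And>x. \<bar>s x\<bar> = 1"
    and sb: "\<And>y. y \<in> {c..d} \<Longrightarrow> \<bar>LINT x:{c..y}|lborel. s x * f1 x\<bar> \<le> \<eta> \<and> \<bar>LINT x:{c..y}|lborel. s x * f2 x\<bar> \<le> \<eta>"
    using cancel[OF cd(2) i1 i2 eta0] by blast
  have s1': "\<And>x. \<bar>s x\<bar> \<le> 1" by (simp add: s1)
  have sbg: "\<bar>LINT x:{l..r}|lborel. s x * f x\<bar> \<le> 2 * \<eta>"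
    if fi: "set_integrable lborel {c..d} f" and fb: "\<And>y. y \<in> {c..d} \<Longrightarrow> \<bar>LINT x:{c..y}|lborel. s x * f x\<bar> \<le> \<eta>"
      and lr: "c \<le> l" "l \<le> r" "r \<le> d" for f :: "real \<Rightarrow> real" and l r
  proof -
    have sfi: "set_integrable lborel {c..r} (\<lambda>x. s x * f x)"
      using lr by (intro set_integrable_subset[OF sint_mult[OF s_meas s1' fi]]) auto
    have "(LINT x:{c..r}|lborel. s x * f x) = (LINT x:{c..l}|lborel. s x * f x) + (LINT x:{l..r}|lborel. s x * f x)"
      by (rule Icc_split[OF lr(1,2) sfi])
    moreover have "\<bar>LINT x:{c..r}|lborel. s x * f x\<bar> \<le> \<eta>" using fb lr by simp
    moreover have "\<bar>LINT x:{c..l}|lborel. s x * f x\<bar> \<le> \<eta>" using fb lr by simp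
    ultimately show ?thesis by linarith
  qed
  have sb1: "\<And>l r. c \<le> l \<Longrightarrow> l \<le> r \<Longrightarrow> r \<le> d \<Longrightarrow> \<bar>LINT x:{l..r}|lborel. s x * f1 x\<bar> \<le> 2 * \<eta>"
    using sbg[OF i1] sb by blast
  have sb2: "\<And>l r. c \<le> l \<Longrightarrow> l \<le> r \<Longrightarrow> r \<le> d \<Longrightarrow> \<bar>LINT x:{l..r}|lborel. s x * f2 x\<bar> \<le> 2 * \<eta>"
    using sbg[OF i2] sb by blast
  define g where "g x = indicator {c..d} x * (s x * h x)" for x
  define ui where "ui t = inv_into {0<..} a t" for t
  have g0: "\<And>x. x \<notin> {c..d} \<Longrightarrow> g x = 0" by (simp add: g_def)
  have gcd: "\<And>x. x \<in> {c..d} \<Longrightarrow> g x = s x * h x" by (simp add: g_def)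
  have VV: "\<And>x. V1fun p v1 a b x = V x" by (simp add: V_def)
  have ww: "\<And>x. wgt p v1 x = w x" by (simp add: w_def)
  have empty_int: "\<And>x. x \<in> {t..ui t} \<Longrightarrow> x \<notin> {c..d}" if t: "0 < t" "t \<notin> {a c..d}" for t
  proof -
    fix x assume x: "x \<in> {t..ui t}"
    show "x \<notin> {c..d}"
    proof (cases "d < t")
      case True then show ?thesis using x by auto
    next
      case False
      then have "t < a c" using t by auto
      then have "ui t < c" unfolding ui_def using ui_lt t by blast
      then show ?thesis using x by auto
    qed
  qed
  have IGb: "\<bar>LINT x:{t..ui t}|lborel. g x / V1fun p v1 a b x * (LINT s:{a x..t}|lborel. wgt p v1 s)\<bar> \<le> (BW + 1) * (2 * \<eta>)"
    if t: "t \<in> {a c..d}" for t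
  proof -
    have t0: "0 < t" using ac0 t by simp
    define I where "I = {x. t \<le> x \<and> x \<le> ui t \<and> c \<le> x \<and> x \<le> d \<and> a x \<le> t}"
    have sub: "I \<subseteq> {c..d}" by (auto simp: I_def)
    have conv: "y \<in> I" if "x \<in> I" "z \<in> I" "x \<le> y" "y \<le> z" for x y z
    proof -
      have "0 < y" using that c0 by (auto simp: I_def)
      then have "a y \<le> a z" using a_le that by blast
      then show ?thesis using that by (auto simp: I_def)
    qed
    obtain l r where lr: "c \<le> l" "l \<le> r" "r \<le> d"
      and lrI: "\<And>x. x \<noteq> l \<Longrightarrow> x \<noteq> r \<Longrightarrow> (x \<in> I \<longleftrightarrow> l \<le> x \<and> x \<le> r)"
    proof -
      have "\<exists>l r. c \<le> l \<and> l \<le> r \<and> r \<le> d \<and> (\<forall>x. x \<noteq> l \<longrightarrow> x \<noteq> r \<longrightarrow> (x \<in> I \<longleftrightarrow> l \<le> x \<and> x \<le> r))"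
        apply (rule conv_interval[OF sub cd(2)])
        apply (erule (3) conv)
        done
      then show ?thesis using that by blast
    qed
    have eq: "(LINT x:{t..ui t}|lborel. g x / V1fun p v1 a b x * (LINT s:{a x..t}|lborel. wgt p v1 s))
        = (LINT x:{l..r}|lborel. W t * (s x * f1 x) - s x * f2 x)"
    proof -
      have pw: "indicator {t..ui t} x *\<^sub>R (g x / V1fun p v1 a b x * (LINT s:{a x..t}|lborel. wgt p v1 s))
          = indicator {l..r} x *\<^sub>R (W t * (s x * f1 x) - s x * f2 x)" if xlr: "x \<notin> {l, r}" for x
      proof (cases "x \<in> I")
        case True
        then have x: "t \<le> x" "x \<le> ui t" "c \<le> x" "x \<le> d" "a x \<le> t" by (auto simp: I_def)
        have h1: "a c \<le> a x" using a_le[OF c0 x(3)] .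
        have K: "(LINT s:{a x..t}|lborel. wgt p v1 s) = W t - W (a x)"
          unfolding W_def ww by (rule Wsplit[OF ac0 h1 x(5)])
        have lx: "l \<le> x \<and> x \<le> r" using lrI[of x] xlr True by simp
        have "V x \<noteq> 0" using Vnz x by simp
        then show ?thesis using x lx
          by (simp add: K g_def f1_def f2_def VV indicator_def field_simps)
      next
        case False
        then have "\<not> (l \<le> x \<and> x \<le> r)" using lrI[of x] xlr by simp
        then have R: "indicator {l..r} x = (0::real)" by (simp add: indicator_def)
        have "indicator {t..ui t} x * (g x / V1fun p v1 a b x * (LINT s:{a x..t}|lborel. wgt p v1 s)) = 0"
        proof (cases "x \<in> {t..ui t} \<and> x \<in> {c..d}")
          case True
          then have "\<not> a x \<le> t" using False by (auto simp: I_def)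
          then have "{a x..t} = {}" by auto
          then have "(LINT s:{a x..t}|lborel. wgt p v1 s) = 0" by (simp add: set_lebesgue_integral_def)
          then show ?thesis by simp
        next
          case False
          then show ?thesis by (auto simp: g_def indicator_def)
        qed
        then show ?thesis using R by simp
      qed
      show ?thesis unfolding set_lebesgue_integral_def
        apply (rule integral_discrete_difference[where X="{l, r}"])
           apply simp
          apply auto[1]
         apply auto[1]
        apply (rule pw[unfolded set_lebesgue_integral_def])
        apply simp
        done
    qed
    have if1: "set_integrable lborel {l..r} (\<lambda>x. s x * f1 x)"
      using lr by (intro set_integrable_subset[OF sint_mult[OF s_meas s1' i1]]) auto
    have if2: "set_integrable lborel {l..r} (\<lambda>x. s x * f2 x)"
      using lr by (intro set_integrable_subset[OF sint_mult[OF s_meas s1' i2]]) auto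
    have "(LINT x:{l..r}|lborel. W t * (s x * f1 x) - s x * f2 x)
        = W t * (LINT x:{l..r}|lborel. s x * f1 x) - (LINT x:{l..r}|lborel. s x * f2 x)"
      using if1 if2 by (subst set_integral_diff(2)) auto
    moreover have "\<bar>W t\<bar> \<le> BW" using BW t by blast
    moreover have A: "\<bar>LINT x:{l..r}|lborel. s x * f1 x\<bar> \<le> 2 * \<eta>" by (rule sb1[OF lr])
    moreover have B: "\<bar>LINT x:{l..r}|lborel. s x * f2 x\<bar> \<le> 2 * \<eta>" by (rule sb2[OF lr])
    ultimately have "\<bar>LINT x:{l..r}|lborel. W t * (s x * f1 x) - s x * f2 x\<bar> \<le> BW * (2 * \<eta>) + 2 * \<eta>"
    proof -
      assume e: "(LINT x:{l..r}|lborel. W t * (s x * f1 x) - s x * f2 x)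
        = W t * (LINT x:{l..r}|lborel. s x * f1 x) - (LINT x:{l..r}|lborel. s x * f2 x)"
        and wb: "\<bar>W t\<bar> \<le> BW"
      have "\<bar>W t * (LINT x:{l..r}|lborel. s x * f1 x)\<bar> \<le> BW * (2 * \<eta>)"
        unfolding abs_mult by (rule mult_mono[OF wb A]) (use BW0 in simp_all)
      then show ?thesis unfolding e using B by linarith
    qed
    then show ?thesis unfolding eq by (simp add: algebra_simps)
  qed
  have ICb: "\<bar>LINT x:{t..ui t}|lborel. g x / V1fun p v1 a b x\<bar> \<le> 2 * \<eta>"
    if t: "t \<in> {a c..d}" for t
  proof -
    define I where "I = {x. t \<le> x \<and> x \<le> ui t \<and> c \<le> x \<and> x \<le> d}"
    have sub: "I \<subseteq> {c..d}" by (auto simp: I_def)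
    have conv: "y \<in> I" if "x \<in> I" "z \<in> I" "x \<le> y" "y \<le> z" for x y z
      using that by (auto simp: I_def)
    obtain l r where lr: "c \<le> l" "l \<le> r" "r \<le> d"
      and lrI: "\<And>x. x \<noteq> l \<Longrightarrow> x \<noteq> r \<Longrightarrow> (x \<in> I \<longleftrightarrow> l \<le> x \<and> x \<le> r)"
    proof -
      have "\<exists>l r. c \<le> l \<and> l \<le> r \<and> r \<le> d \<and> (\<forall>x. x \<noteq> l \<longrightarrow> x \<noteq> r \<longrightarrow> (x \<in> I \<longleftrightarrow> l \<le> x \<and> x \<le> r))"
        apply (rule conv_interval[OF sub cd(2)])
        apply (erule (3) conv)
        done
      then show ?thesis using that by blast
    qed
    have pw: "indicator {t..ui t} x *\<^sub>R (g x / V1fun p v1 a b x) = indicator {l..r} x *\<^sub>R (s x * f1 x)"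
      if xlr: "x \<notin> {l, r}" for x
    proof (cases "x \<in> I")
      case True
      then have x: "t \<le> x" "x \<le> ui t" "c \<le> x" "x \<le> d" by (auto simp: I_def)
      have lx: "l \<le> x \<and> x \<le> r" using lrI[of x] xlr True by simp
      then show ?thesis using x by (simp add: g_def f1_def VV indicator_def)
    next
      case False
      then have "\<not> (l \<le> x \<and> x \<le> r)" using lrI[of x] xlr by simp
      then have R: "indicator {l..r} x = (0::real)" by (simp add: indicator_def)
      have "indicator {t..ui t} x * (g x / V1fun p v1 a b x) = 0"
        using False by (auto simp: g_def indicator_def I_def)
      then show ?thesis using R by simp
    qed
    have "(LINT x:{t..ui t}|lborel. g x / V1fun p v1 a b x) = (LINT x:{l..r}|lborel. s x * f1 x)"
      unfolding set_lebesgue_integral_def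
      apply (rule integral_discrete_difference[where X="{l, r}"])
         apply simp
        apply auto[1]
       apply auto[1]
      apply (rule pw)
      apply simp
      done
    then show ?thesis using sb1[OF lr] by simp
  qed
  define Hn where "Hn = (LINT x:{c..d}|lborel. \<bar>h x\<bar>)"
  have ISb: "(LINT x:{t..ui t}|lborel. \<bar>g x\<bar>) \<le> Hn" for t
  proof -
    have "integrable lborel (\<lambda>x. indicator {c..d} x *\<^sub>R \<bar>h x\<bar>)"
      using set_integrable_abs[OF h] unfolding set_integrable_def .
    then show ?thesis unfolding Hn_def set_lebesgue_integral_def
      by (rule integral_mono') (auto simp: g_def indicator_def abs_mult s1)
  qed
  have IS0: "0 \<le> (LINT x:{t..ui t}|lborel. \<bar>g x\<bar>)" for t by (rule set_integral_nonneg') simp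
  have q0: "0 < q" using q1 by simp
  have GGb: "GG p v1 a b g \<le> ennreal ((BW + 1) * (2 * \<eta>) * Iq)"
  proof -
    have "ennpow (\<integral>\<^sup>+t\<in>{0<..}. ennreal (w t * \<bar>LINT x:{t..ui t}|lborel. g x / V1fun p v1 a b x * (LINT s:{a x..t}|lborel. wgt p v1 s)\<bar> powr q) \<partial>lborel) (1 / q)
        \<le> ennreal ((BW + 1) * (2 * \<eta>) * (LINT t:{a c..d}|lborel. w t) powr (1 / q))"
    proof (rule nn_bound[OF q0 _ wint[OF ac0] w0])
      show "0 \<le> (BW + 1) * (2 * \<eta>)" using BW0 eta0 by simp
      fix t :: real assume t0: "0 < t"
      show "w t * \<bar>LINT x:{t..ui t}|lborel. g x / V1fun p v1 a b x * (LINT s:{a x..t}|lborel. wgt p v1 s)\<bar> powr q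
          \<le> indicator {a c..d} t * w t * ((BW + 1) * (2 * \<eta>)) powr q"
      proof (cases "t \<in> {a c..d}")
        case True
        have "\<bar>LINT x:{t..ui t}|lborel. g x / V1fun p v1 a b x * (LINT s:{a x..t}|lborel. wgt p v1 s)\<bar> powr q
            \<le> ((BW + 1) * (2 * \<eta>)) powr q"
          using IGb[OF True] q0 by (intro powr_mono2) auto
        then show ?thesis using True w0[of t] by (simp add: mult_left_mono)
      next
        case False
        have "(LINT x:{t..ui t}|lborel. g x / V1fun p v1 a b x * (LINT s:{a x..t}|lborel. wgt p v1 s)) = 0"
          using empty_int[OF t0 False] by (intro set_integral_zero') (simp add: g0)
        then show ?thesis using False by simp
      qed
    qed
    then show ?thesis unfolding GG_def Iq_def Iw_def q_def[symmetric] w_def[symmetric] ui_def[symmetric] .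
  qed
  have Gcb: "Gc p v1 a b g \<le> ennreal ((BV * (2 * \<eta>)) * Iq)"
  proof -
    have "ennpow (\<integral>\<^sup>+t\<in>{0<..}. ennreal (w t * V1fun p v1 a b t powr q * \<bar>LINT x:{t..ui t}|lborel. g x / V1fun p v1 a b x\<bar> powr q) \<partial>lborel) (1 / q)
        \<le> ennreal ((BV * (2 * \<eta>)) * (LINT t:{a c..d}|lborel. w t) powr (1 / q))"
    proof (rule nn_bound[OF q0 _ wint[OF ac0] w0])
      show "0 \<le> BV * (2 * \<eta>)" using BV0 eta0 by simp
      fix t :: real assume t0: "0 < t"
      show "w t * V1fun p v1 a b t powr q * \<bar>LINT x:{t..ui t}|lborel. g x / V1fun p v1 a b x\<bar> powr q
          \<le> indicator {a c..d} t * w t * (BV * (2 * \<eta>)) powr q"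
      proof (cases "t \<in> {a c..d}")
        case True
        have "\<bar>LINT x:{t..ui t}|lborel. g x / V1fun p v1 a b x\<bar> powr q \<le> (2 * \<eta>) powr q"
          using ICb[OF True] q0 by (intro powr_mono2) auto
        moreover have "V1fun p v1 a b t powr q \<le> BV powr q"
        proof -
          have "V t \<le> BV" using BV True by force
          moreover have "0 \<le> V t" using Vpos[OF t0] by simp
          ultimately show ?thesis unfolding VV using q0 by (intro powr_mono2) auto
        qed
        ultimately have "V1fun p v1 a b t powr q * \<bar>LINT x:{t..ui t}|lborel. g x / V1fun p v1 a b x\<bar> powr q
            \<le> BV powr q * (2 * \<eta>) powr q"
          by (intro mult_mono) auto
        then have "w t * (V1fun p v1 a b t powr q * \<bar>LINT x:{t..ui t}|lborel. g x / V1fun p v1 a b x\<bar> powr q)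
            \<le> w t * (BV powr q * (2 * \<eta>) powr q)"
          by (intro mult_left_mono w0)
        then show ?thesis using True by (simp add: powr_mult mult.assoc)
      next
        case False
        have "(LINT x:{t..ui t}|lborel. g x / V1fun p v1 a b x) = 0"
          using empty_int[OF t0 False] by (intro set_integral_zero') (simp add: g0)
        then show ?thesis using False by simp
      qed
    qed
    then show ?thesis unfolding Gc_def Iq_def Iw_def q_def[symmetric] w_def[symmetric] ui_def[symmetric] .
  qed
  have Gsb: "Gs p v1 a g \<le> ennreal (Hn * Iq)"
  proof -
    have "ennpow (\<integral>\<^sup>+t\<in>{0<..}. ennreal ((LINT x:{t..ui t}|lborel. \<bar>g x\<bar>) powr q * w t) \<partial>lborel) (1 / q)
        \<le> ennreal (Hn * (LINT t:{a c..d}|lborel. w t) powr (1 / q))"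
    proof (rule nn_bound[OF q0 _ wint[OF ac0] w0])
      show "0 \<le> Hn" unfolding Hn_def by (rule set_integral_nonneg') simp
      fix t :: real assume t0: "0 < t"
      show "(LINT x:{t..ui t}|lborel. \<bar>g x\<bar>) powr q * w t \<le> indicator {a c..d} t * w t * Hn powr q"
      proof (cases "t \<in> {a c..d}")
        case True
        have "(LINT x:{t..ui t}|lborel. \<bar>g x\<bar>) powr q \<le> Hn powr q"
          using ISb[of t] IS0[of t] q0 by (intro powr_mono2) auto
        then show ?thesis using True w0[of t] by (simp add: mult_left_mono mult.commute)
      next
        case False
        have "(LINT x:{t..ui t}|lborel. \<bar>g x\<bar>) = 0"
          using empty_int[OF t0 False] by (intro set_integral_zero') (simp add: g0)
        then show ?thesis using False by simp
      qed
    qed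
    then show ?thesis unfolding Gs_def Iq_def Iw_def q_def[symmetric] w_def[symmetric] ui_def[symmetric] .
  qed
  have mh: "(\<lambda>x. indicator {c..d} x *\<^sub>R h x) \<in> borel_measurable borel"
    using borel_measurable_integrable[OF h[unfolded set_integrable_def]] by simp
  have Lg: "Lloc 1 g"
    unfolding Lloc_def
  proof (intro conjI allI impI)
    have "(\<lambda>x. indicator {0<..} x * g x) = (\<lambda>x. indicator {0<..} x * (s x * (indicator {c..d} x *\<^sub>R h x)))"
      by (auto simp: g_def fun_eq_iff)
    then show "(\<lambda>x. indicator {0<..} x * g x) \<in> borel_measurable lborel"
      using s_meas mh by simp
    fix c' d' :: real
    have hb: "(\<integral>\<^sup>+x. ennreal (norm (indicator {c..d} x *\<^sub>R h x)) \<partial>lborel) < \<infinity>"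
      using h unfolding set_integrable_def integrable_iff_bounded by simp
    have "(\<integral>\<^sup>+x\<in>{c'..d'}. ennreal (\<bar>g x\<bar> powr 1) \<partial>lborel) \<le> (\<integral>\<^sup>+x. ennreal (norm (indicator {c..d} x *\<^sub>R h x)) \<partial>lborel)"
      by (rule nn_integral_mono) (auto simp: g_def indicator_def abs_mult s1 intro: ennreal_leI)
    then show "(\<integral>\<^sup>+x\<in>{c'..d'}. ennreal (\<bar>g x\<bar> powr 1) \<partial>lborel) < \<infinity>"
      using hb by (rule le_less_trans)
  qed
  have Gsfin: "Gs p v1 a g < \<infinity>"
    using le_less_trans[OF Gsb ennreal_less_top] by simp
  have fin: "(BW + 1) * (2 * \<eta>) * Iq + (BV * (2 * \<eta>)) * Iq < \<epsilon>"
  proof -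
    have nz: "BW + BV + 1 \<noteq> 0" "Iq + 1 \<noteq> 0" using BW0 BV0 Iq0 by auto
    have A: "(BW + 1) * (2 * \<eta>) * Iq + (BV * (2 * \<eta>)) * Iq = (2 * \<eta> * (BW + BV + 1)) * Iq"
      by (simp add: algebra_simps)
    define X where "X = BW + BV + 1"
    define Y where "Y = Iq + 1"
    have XY: "X \<noteq> 0" "Y \<noteq> 0" using nz by (simp_all add: X_def Y_def)
    have e: "\<eta> = \<epsilon> / (4 * X * Y)" by (simp add: \<eta>_def X_def Y_def)
    have "2 * \<eta> * X = (\<epsilon> / 2) / Y" unfolding e using XY by (simp add: field_simps)
    then have B: "2 * \<eta> * (BW + BV + 1) = (\<epsilon> / 2) / (Iq + 1)" by (simp add: X_def Y_def)
    have C: "Iq / (Iq + 1) \<le> 1" using Iq0 by simp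
    have "(BW + 1) * (2 * \<eta>) * Iq + (BV * (2 * \<eta>)) * Iq = (\<epsilon> / 2) * (Iq / (Iq + 1))"
      unfolding A B by simp
    also have "\<dots> \<le> (\<epsilon> / 2) * 1" using C eps by (intro mult_left_mono) auto
    also have "\<dots> < \<epsilon>" using eps by simp
    finally show ?thesis .
  qed
  show "\<exists>g \<in> Wspace p v1 a. (\<forall>x\<in>{c..d}. \<bar>g x\<bar> = \<bar>h x\<bar>) \<and> Wnorm p v1 a b g < ennreal \<epsilon>"
  proof (intro bexI conjI ballI)
    show "g \<in> Wspace p v1 a" unfolding Wspace_def using Lg Gsfin by simp
    fix x assume "x \<in> {c..d}"
    then show "\<bar>g x\<bar> = \<bar>h x\<bar>" by (simp add: g_def abs_mult s1)
  next
    have "Wnorm p v1 a b g \<le> ennreal ((BW + 1) * (2 * \<eta>) * Iq) + ennreal ((BV * (2 * \<eta>)) * Iq)"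
      unfolding Wnorm_def by (intro add_mono GGb Gcb)
    also have "\<dots> = ennreal ((BW + 1) * (2 * \<eta>) * Iq + (BV * (2 * \<eta>)) * Iq)"
      using BW0 BV0 Iq0 eta0 by (intro ennreal_plus[symmetric]) auto
    also have "\<dots> < ennreal \<epsilon>"
      using fin eps BW0 BV0 Iq0 eta0 by (subst ennreal_less_iff) auto
    finally show "Wnorm p v1 a b g < ennreal \<epsilon>" .
  qed
qed

end
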